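(* Let $V$ be a real vector space of dimension $d$, and $G$ a group of affine-linear transformations of $V$ including all translations. Then the dilation component $\rho_0\colon\mathcal{CB}(V,G)\to\mathcal{CB}(V,G)$ is a group homomorphism, and the dilation components $\rho_1,\ldots,\rho_d\colon[0,\infty)\times\mathcal{CB}(V,G)\to\mathcal{CB}(V,G)$ are group homomorphisms in their second variable.
   Context: $\mathcal{K}(V)$ is the set of nonempty compact convex subsets of $V$ with the Hausdorff metric topology. $\mathcal{CB}(V,G)$ is the quotient (with quotient topology) of the free Hausdorff topological abelian group $\mathbb{Z}\mathcal{K}(V)$ on $\mathcal{K}(V)$ (the Hausdorff topological abelian group with continuous map $X\mapsto[X]$ through which every continuous map from $\mathcal{K}(V)$ to a Hausdorff topological abelian group factors uniquely via a continuous homomorphism) by the closure of the subgroup generated by all $[B\cup C]-[B]-[C]+[B\cap C]$ ($B,C,B\cup C\in\mathcal{K}(V)$) and all $[X]-[gX]$ ($g\in G$); images are still written $[X]$. The dilation map $D\colon[0,\infty)\times\mathcal{CB}(V,G)\to\mathcal{CB}(V,G)$ is the unique continuous map that is a homomorphism in its second variable with $D(\lambda,[X])=[\lambda X]$. The dilation components are the uniquely determined continuous maps $\rho_0\colon\mathcal{CB}(V,G)\to\mathcal{CB}(V,G)$ and $\rho_1,\ldots,\rho_d\colon[0,\infty)\times\mathcal{CB}(V,G)\to\mathcal{CB}(V,G)$ such that each $\rho_i(-,x)$ ($i\geqslant1$) is a semigroup homomorphism $([0,\infty),+)\to\mathcal{CB}(V,G)$ and $D(\lambda,x)=\rho_0(x)+\rho_1(\lambda^1,x)+\cdots+\rho_d(\lambda^d,x)$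 for all $\lambda\in[0,\infty)$, $x\in\mathcal{CB}(V,G)$. *)

theory Defs
  imports "HOL-Analysis.Analysis"
begin

definition hausdorff_dist :: "'v::euclidean_space set \<Rightarrow> 'v set \<Rightarrow> real" where
  "hausdorff_dist X Y = max (SUP x\<in>X. infdist x Y) (SUP y\<in>Y. infdist y X)"

definition Kset :: "'v::euclidean_space set set" where
  "Kset = {X. X \<noteq> {} \<and> compact X \<and> convex X}"

definition Ktop :: "'v::euclidean_space set topology" where
  "Ktop = topology (\<lambda>U. U \<subseteq> Kset \<and>
      (\<forall>X\<in>U. \<exists>e>0. \<forall>Y\<in>Kset. hausdorff_dist X Y < e \<longrightarrow> Y \<in> U))"

text \<open>Elements of Z K(V): finitely supported integer-valued functions on K(V).\<close>
definition ZK :: "('v::euclidean_space set \<Rightarrow> int) set" where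
  "ZK = {f. finite {X. f X \<noteq> 0} \<and> {X. f X \<noteq> 0} \<subseteq> Kset}"

definition zadd :: "('a \<Rightarrow> int) \<Rightarrow> ('a \<Rightarrow> int) \<Rightarrow> ('a \<Rightarrow> int)" where
  "zadd f g = (\<lambda>X. f X + g X)"

definition zneg :: "('a \<Rightarrow> int) \<Rightarrow> ('a \<Rightarrow> int)" where
  "zneg f = (\<lambda>X. - f X)"

definition zzero :: "'a \<Rightarrow> int" where
  "zzero = (\<lambda>X. 0)"

definition zgen :: "'a \<Rightarrow> ('a \<Rightarrow> int)" where
  "zgen X = (\<lambda>Y. if Y = X then 1 else 0)"

definition hausdorff_group_topology :: "('v::euclidean_space set \<Rightarrow> int) topology \<Rightarrow> bool" where
  "hausdorff_group_topology T \<longleftrightarrow> topspace T = ZK \<and> Hausdorff_space T \<and>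
     continuous_map (prod_topology T T) T (\<lambda>(f, g). zadd f g) \<and>
     continuous_map T T zneg"

text \<open>The free Hausdorff topological abelian group topology: the finest Hausdorff group
  topology on Z K(V) for which the map X \<mapsto> [X] is continuous (this is exactly the
  topology with the stated universal property).\<close>
definition FZtop :: "('v::euclidean_space set \<Rightarrow> int) topology" where
  "FZtop = topology_generated_by
     (\<Union>{{U. openin T U} | T. hausdorff_group_topology T \<and> continuous_map Ktop T zgen})"

definition zspan :: "('a \<Rightarrow> int) set \<Rightarrow> ('a \<Rightarrow> int) set" where
  "zspan A = \<Inter>{H. A \<subseteq> H \<and> zzero \<in> H \<and> (\<forall>f\<in>H. \<forall>g\<in>H. zadd f g \<in> H) \<and> (\<forall>f\<in>H. zneg f \<in> H)}"

definition CBrels :: "('v::euclidean_space \<Rightarrow> 'v) set \<Rightarrow> ('v set \<Rightarrow> int) set" where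
  "CBrels G =
     {zadd (zadd (zadd (zgen (B \<union> C)) (zneg (zgen B))) (zneg (zgen C))) (zgen (B \<inter> C)) | B C.
        B \<in> Kset \<and> C \<in> Kset \<and> B \<union> C \<in> Kset}
   \<union> {zadd (zgen X) (zneg (zgen (g ` X))) | X g. X \<in> Kset \<and> g \<in> G}"

definition CBker :: "('v::euclidean_space \<Rightarrow> 'v) set \<Rightarrow> ('v set \<Rightarrow> int) set" where
  "CBker G = FZtop closure_of (zspan (CBrels G))"

definition cls :: "('v::euclidean_space \<Rightarrow> 'v) set \<Rightarrow> ('v set \<Rightarrow> int) \<Rightarrow> ('v set \<Rightarrow> int) set" where
  "cls G f = {g \<in> ZK. zadd g (zneg f) \<in> CBker G}"

definition CB :: "('v::euclidean_space \<Rightarrow> 'v) set \<Rightarrow> ('v set \<Rightarrow> int) set set" where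
  "CB G = cls G ` ZK"

definition cbadd :: "('v set \<Rightarrow> int) set \<Rightarrow> ('v set \<Rightarrow> int) set \<Rightarrow> ('v set \<Rightarrow> int) set" where
  "cbadd x y = {zadd a b | a b. a \<in> x \<and> b \<in> y}"

definition CBtop :: "('v::euclidean_space \<Rightarrow> 'v) set \<Rightarrow> ('v set \<Rightarrow> int) set topology" where
  "CBtop G = topology (\<lambda>U. U \<subseteq> CB G \<and> openin FZtop {f \<in> ZK. cls G f \<in> U})"

definition cbclass :: "('v::euclidean_space \<Rightarrow> 'v) set \<Rightarrow> 'v set \<Rightarrow> ('v set \<Rightarrow> int) set" where
  "cbclass G X = cls G (zgen X)"

definition RCBtop :: "('v::euclidean_space \<Rightarrow> 'v) set \<Rightarrow> (real \<times> ('v set \<Rightarrow> int) set) topology" where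
  "RCBtop G = prod_topology (subtopology euclideanreal {0..}) (CBtop G)"

definition affine_group_with_translations :: "('v::euclidean_space \<Rightarrow> 'v) set \<Rightarrow> bool" where
  "affine_group_with_translations G \<longleftrightarrow>
     (\<forall>g\<in>G. \<exists>f c. linear f \<and> bij f \<and> g = (\<lambda>x. f x + c)) \<and>
     id \<in> G \<and> (\<forall>g\<in>G. \<forall>h\<in>G. g \<circ> h \<in> G) \<and> (\<forall>g\<in>G. inv g \<in> G) \<and>
     (\<forall>c. (\<lambda>x. x + c) \<in> G)"

primrec iter_sum :: "('c \<Rightarrow> 'c \<Rightarrow> 'c) \<Rightarrow> (nat \<Rightarrow> 'c) \<Rightarrow> 'c \<Rightarrow> nat \<Rightarrow> 'c" where
  "iter_sum p f b 0 = b"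
| "iter_sum p f b (Suc n) = p (iter_sum p f b n) (f (Suc n))"

definition is_dilation_map ::
  "('v::euclidean_space \<Rightarrow> 'v) set \<Rightarrow> (real \<Rightarrow> ('v set \<Rightarrow> int) set \<Rightarrow> ('v set \<Rightarrow> int) set) \<Rightarrow> bool" where
  "is_dilation_map G D \<longleftrightarrow>
     continuous_map (RCBtop G) (CBtop G) (\<lambda>(l, x). D l x) \<and>
     (\<forall>l\<ge>0. \<forall>x\<in>CB G. \<forall>y\<in>CB G. D l (cbadd x y) = cbadd (D l x) (D l y)) \<and>
     (\<forall>l\<ge>0. \<forall>X\<in>Kset. D l (cbclass G X) = cbclass G ((\<lambda>v. l *\<^sub>R v) ` X))"

definition are_dilation_components ::
  "('v::euclidean_space \<Rightarrow> 'v) set \<Rightarrow> (real \<Rightarrow> ('v set \<Rightarrow> int) set \<Rightarrow> ('v set \<Rightarrow> int) set)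
   \<Rightarrow> (('v set \<Rightarrow> int) set \<Rightarrow> ('v set \<Rightarrow> int) set)
   \<Rightarrow> (nat \<Rightarrow> real \<Rightarrow> ('v set \<Rightarrow> int) set \<Rightarrow> ('v set \<Rightarrow> int) set) \<Rightarrow> bool" where
  "are_dilation_components G D \<rho>0 \<rho> \<longleftrightarrow>
     continuous_map (CBtop G) (CBtop G) \<rho>0 \<and>
     (\<forall>i\<in>{1..DIM('v)}.
        continuous_map (RCBtop G) (CBtop G) (\<lambda>(l, x). \<rho> i l x) \<and>
        (\<forall>x\<in>CB G. \<forall>a\<ge>0. \<forall>b\<ge>0. \<rho> i (a + b) x = cbadd (\<rho> i a x) (\<rho> i b x))) \<and>
     (\<forall>l\<ge>0. \<forall>x\<in>CB G. D l x = iter_sum cbadd (\<lambda>i. \<rho> i (l ^ i) x) (\<rho>0 x) DIM('v))"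

end

theory Submission
  imports Defs "HOL-Library.Function_Algebras"
begin

lemma Kset_D: "X \<in> Kset \<Longrightarrow> X \<noteq> {} \<and> compact X \<and> convex X"
  by (simp add: Kset_def)

lemma infdist_bdd:
  fixes X Y :: "'v::euclidean_space set"
  assumes "X \<in> Kset" "Y \<in> Kset"
  shows "bdd_above ((\<lambda>x. infdist x Y) ` X)"
proof -
  obtain y0 where y0: "y0 \<in> Y" using assms Kset_D by blast
  obtain B where B: "\<forall>x\<in>X. norm x \<le> B"
    using assms Kset_D compact_imp_bounded bounded_iff by metis
  have "\<forall>x\<in>X. infdist x Y \<le> B + norm y0"
  proof
    fix x assume "x \<in> X"
    have "infdist x Y \<le> dist x y0" by (rule infdist_le[OF y0])
    also have "\<dots> \<le> norm x + norm y0" by (simp add: dist_norm norm_triangle_ineq4)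
    finally show "infdist x Y \<le> B + norm y0" using B \<open>x \<in> X\<close> by force
  qed
  then show ?thesis by (auto intro: bdd_aboveI2)
qed

lemma hd_upper1:
  assumes "X \<in> Kset" "Y \<in> Kset" "x \<in> X"
  shows "infdist x Y \<le> hausdorff_dist X Y"
proof -
  have "infdist x Y \<le> (SUP x\<in>X. infdist x Y)"
    by (rule cSUP_upper[OF assms(3) infdist_bdd[OF assms(1,2)]])
  then show ?thesis unfolding hausdorff_dist_def by linarith
qed

lemma hd_sym: "hausdorff_dist X Y = hausdorff_dist Y X"
  unfolding hausdorff_dist_def by (simp add: max.commute)

lemma hd_upper2:
  assumes "X \<in> Kset" "Y \<in> Kset" "y \<in> Y"
  shows "infdist y X \<le> hausdorff_dist X Y"
  using hd_upper1[OF assms(2,1,3)] hd_sym by metis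

lemma hd_least:
  assumes "X \<in> Kset" "Y \<in> Kset" "\<And>x. x \<in> X \<Longrightarrow> infdist x Y \<le> r"
    "\<And>y. y \<in> Y \<Longrightarrow> infdist y X \<le> r"
  shows "hausdorff_dist X Y \<le> r"
proof -
  have "X \<noteq> {}" "Y \<noteq> {}" using assms Kset_D by auto
  then have "(SUP x\<in>X. infdist x Y) \<le> r" "(SUP y\<in>Y. infdist y X) \<le> r"
    using assms by (auto intro!: cSUP_least)
  then show ?thesis unfolding hausdorff_dist_def by simp
qed

lemma hd_nonneg:
  assumes "X \<in> Kset" "Y \<in> Kset"
  shows "0 \<le> hausdorff_dist X Y"
proof -
  obtain x where "x \<in> X" using assms Kset_D by blast
  then show ?thesis using hd_upper1[OF assms] infdist_nonneg order_trans by metis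
qed

lemma hd_refl: "X \<in> Kset \<Longrightarrow> hausdorff_dist X X = 0"
  using hd_least[of X X 0] hd_nonneg[of X X] by fastforce

lemma hd_pos:
  assumes "X \<in> Kset" "Y \<in> Kset" "X \<noteq> Y"
  shows "0 < hausdorff_dist X Y"
proof -
  have cX: "closed X" "X \<noteq> {}" and cY: "closed Y" "Y \<noteq> {}"
    using assms Kset_D compact_imp_closed by auto
  from assms(3) have "(\<exists>x\<in>X. x \<notin> Y) \<or> (\<exists>y\<in>Y. y \<notin> X)" by blast
  then show ?thesis
  proof
    assume "\<exists>x\<in>X. x \<notin> Y"
    then obtain x where "x \<in> X" "x \<notin> Y" by blast
    then show ?thesis using infdist_pos_not_in_closed[OF cY] hd_upper1[OF assms(1,2)]
      by (meson less_le_trans)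
  next
    assume "\<exists>y\<in>Y. y \<notin> X"
    then obtain y where "y \<in> Y" "y \<notin> X" by blast
    then show ?thesis using infdist_pos_not_in_closed[OF cX] hd_upper2[OF assms(1,2)]
      by (meson less_le_trans)
  qed
qed

lemma hd_triangle:
  assumes "X \<in> Kset" "Y \<in> Kset" "Z \<in> Kset"
  shows "hausdorff_dist X Z \<le> hausdorff_dist X Y + hausdorff_dist Y Z"
proof (rule hd_least[OF assms(1,3)])
  have cY: "closed Y" "Y \<noteq> {}" and cX: "closed X" "X \<noteq> {}"
    using assms Kset_D compact_imp_closed by auto
  fix x assume x: "x \<in> X"
  obtain y where y: "y \<in> Y" "infdist x Y = dist x y" using infdist_attains_inf[OF cY] by metis
  have "infdist x Z \<le> infdist y Z + dist x y" by (rule infdist_triangle)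
  also have "\<dots> \<le> hausdorff_dist Y Z + hausdorff_dist X Y"
    using hd_upper1[OF assms(2,3) y(1)] hd_upper1[OF assms(1,2) x] y(2) by linarith
  finally show "infdist x Z \<le> hausdorff_dist X Y + hausdorff_dist Y Z" by simp
next
  have cY: "closed Y" "Y \<noteq> {}"
    using assms Kset_D compact_imp_closed by auto
  fix z assume z: "z \<in> Z"
  obtain y where y: "y \<in> Y" "infdist z Y = dist z y" using infdist_attains_inf[OF cY] by metis
  have "infdist z X \<le> infdist y X + dist z y" by (rule infdist_triangle)
  also have "\<dots> \<le> hausdorff_dist X Y + hausdorff_dist Y Z"
    using hd_upper2[OF assms(1,2) y(1)] hd_upper2[OF assms(2,3) z] y(2) by linarith
  finally show "infdist z X \<le> hausdorff_dist X Y + hausdorff_dist Y Z" by simp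
qed

lemma zadd_eq: "zadd f g = f + g" by (simp add: zadd_def fun_eq_iff)
lemma zneg_eq: "zneg f = - f" by (simp add: zneg_def fun_eq_iff)
lemma zzero_eq: "zzero = 0" by (simp add: zzero_def fun_eq_iff)

lemma ZK_add: "f \<in> ZK \<Longrightarrow> g \<in> ZK \<Longrightarrow> f + g \<in> ZK"
proof -
  assume f: "f \<in> ZK" and g: "g \<in> ZK"
  have "{X. (f + g) X \<noteq> 0} \<subseteq> {X. f X \<noteq> 0} \<union> {X. g X \<noteq> 0}" by auto
  then show ?thesis using f g unfolding ZK_def by (auto intro: finite_subset)
qed

lemma ZK_neg: "f \<in> ZK \<Longrightarrow> - f \<in> ZK"
  unfolding ZK_def by simp

lemma ZK_zero: "0 \<in> ZK"
  unfolding ZK_def by simp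

lemma ZK_diff: "f \<in> ZK \<Longrightarrow> g \<in> ZK \<Longrightarrow> f - g \<in> ZK"
  using ZK_add[OF _ ZK_neg] by (metis diff_conv_add_uminus)

lemma zgen_ZK: "X \<in> Kset \<Longrightarrow> zgen X \<in> ZK"
proof -
  assume "X \<in> Kset"
  moreover have "{Y. zgen X Y \<noteq> 0} = {X}" by (auto simp: zgen_def)
  ultimately show ?thesis unfolding ZK_def by simp
qed

definition bump :: "'v::euclidean_space set \<Rightarrow> 'v set \<times> real \<Rightarrow> real" where
  "bump X p = (if fst p \<in> Kset then max 0 (snd p - hausdorff_dist X (fst p)) else 0)"

definition Psi :: "('v::euclidean_space set \<Rightarrow> int) \<Rightarrow> ('v set \<times> real \<Rightarrow> real)" where
  "Psi f = (\<lambda>p. \<Sum>X\<in>{X. f X \<noteq> 0}. real_of_int (f X) * bump X p)"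

lemma Psi_sum:
  assumes "finite S" "{X. f X \<noteq> 0} \<subseteq> S"
  shows "Psi f p = (\<Sum>X\<in>S. real_of_int (f X) * bump X p)"
  unfolding Psi_def by (rule sum.mono_neutral_left) (use assms in auto)

lemma Psi_add:
  assumes "f \<in> ZK" "g \<in> ZK"
  shows "Psi (f + g) = Psi f + Psi g"
proof
  fix p
  let ?S = "{X. f X \<noteq> 0} \<union> {X. g X \<noteq> 0}"
  have fin: "finite ?S" using assms unfolding ZK_def by auto
  have "Psi (f + g) p = (\<Sum>X\<in>?S. real_of_int ((f + g) X) * bump X p)"
    by (rule Psi_sum[OF fin]) auto
  also have "\<dots> = (\<Sum>X\<in>?S. real_of_int (f X) * bump X p) + (\<Sum>X\<in>?S. real_of_int (g X) * bump X p)"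
    by (simp add: sum.distrib distrib_right)
  also have "\<dots> = Psi f p + Psi g p"
    using Psi_sum[OF fin, of f p] Psi_sum[OF fin, of g p] by auto
  finally show "Psi (f + g) p = (Psi f + Psi g) p" by simp
qed

lemma Psi_neg: "Psi (- f) = - Psi f"
  unfolding Psi_def by (auto simp: fun_eq_iff sum_negf)

lemma Psi_zgen: "Psi (zgen X) = bump X"
proof -
  have "{Y. zgen X Y \<noteq> 0} = {X}" by (auto simp: zgen_def)
  then show ?thesis unfolding Psi_def by (auto simp: fun_eq_iff zgen_def)
qed

lemma Psi_zero_imp:
  assumes "f \<in> ZK" "Psi f = 0"
  shows "f = 0"
proof (rule ccontr)
  assume "f \<noteq> 0"
  then obtain X1 where X1: "f X1 \<noteq> 0" by (auto simp: fun_eq_iff)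
  let ?S = "{X. f X \<noteq> 0}"
  have fin: "finite ?S" and SK: "?S \<subseteq> Kset" using assms unfolding ZK_def by auto
  have X1K: "X1 \<in> Kset" using X1 SK by auto
  define r where "r = (if ?S - {X1} = {} then 1 else Min (hausdorff_dist X1 ` (?S - {X1})))"
  have rpos: "r > 0"
  proof (cases "?S - {X1} = {}")
    case True then show ?thesis by (simp add: r_def)
  next
    case False
    have "\<forall>a\<in>hausdorff_dist X1 ` (?S - {X1}). 0 < a"
      using hd_pos[OF X1K] SK by auto
    then show ?thesis using False fin by (simp add: r_def)
  qed
  have rle: "r \<le> hausdorff_dist X Y1" if "X \<in> ?S - {X1}" "Y1 = X1" for X Y1
  proof -
    have "r \<le> hausdorff_dist X1 X" using that fin unfolding r_def by auto
    then show ?thesis using hd_sym that by metis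
  qed
  have "Psi f (X1, r) = (\<Sum>X\<in>?S. real_of_int (f X) * bump X (X1, r))"
    by (rule Psi_sum[OF fin]) auto
  also have "\<dots> = real_of_int (f X1) * bump X1 (X1, r) + (\<Sum>X\<in>?S - {X1}. real_of_int (f X) * bump X (X1, r))"
    using X1 fin by (simp add: sum.remove)
  also have "(\<Sum>X\<in>?S - {X1}. real_of_int (f X) * bump X (X1, r)) = 0"
    by (rule sum.neutral) (use rle X1K in \<open>auto simp: bump_def\<close>)
  also have "bump X1 (X1, r) = r" using rpos hd_refl[OF X1K] X1K by (simp add: bump_def)
  finally have "Psi f (X1, r) \<noteq> 0" using X1 rpos by simp
  then show False using assms(2) by simp
qed

lemma Psi_inj:
  assumes "f \<in> ZK" "g \<in> ZK" "Psi f = Psi g"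
  shows "f = g"
proof -
  have "Psi (f + - g) = Psi f + - Psi g" using Psi_add[OF assms(1) ZK_neg[OF assms(2)]] Psi_neg by metis
  then have "Psi (f + - g) = 0" using assms(3) by simp
  then have "f + - g = 0" by (rule Psi_zero_imp[OF ZK_add[OF assms(1) ZK_neg[OF assms(2)]]])
  then show ?thesis by (simp add: eq_neg_iff_add_eq_0)
qed

definition T0 :: "('v::euclidean_space set \<Rightarrow> int) topology" where
  "T0 = pullback_topology ZK Psi euclidean"

lemma topspace_T0: "topspace T0 = ZK"
  by (simp add: T0_def topspace_pullback_topology)

lemma cont_Psi: "continuous_map T0 euclidean Psi"
  unfolding T0_def using continuous_map_pullback[OF continuous_map_id] by (simp add: o_def id_def)

lemma cont_Psi_coord:
  fixes p :: "'v::euclidean_space set \<times> real"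
  shows "continuous_map (T0::('v set \<Rightarrow> int) topology) euclideanreal (\<lambda>f. Psi f p)"
proof -
  have "continuous_map (euclidean :: ('v set \<times> real \<Rightarrow> real) topology) euclideanreal (\<lambda>h. h p)"
    using continuous_map_product_projection[of p UNIV "\<lambda>_. euclideanreal"]
    by (simp add: euclidean_product_topology)
  from continuous_map_compose[OF cont_Psi this] show ?thesis by (simp add: o_def)
qed

lemma cont_into_T0:
  assumes "\<And>x. x \<in> topspace X \<Longrightarrow> h x \<in> ZK" "\<And>p. continuous_map X euclideanreal (\<lambda>x. Psi (h x) p)"
  shows "continuous_map X T0 h"
  unfolding T0_def
proof (rule continuous_map_pullback')
  show "topspace X \<subseteq> h -` ZK" using assms(1) by auto
  show "continuous_map X euclidean (Psi \<circ> h)"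
    unfolding euclidean_product_topology[symmetric] continuous_map_componentwise_UNIV
    using assms(2) by (simp add: o_def euclidean_product_topology)
qed

lemma cont_T0_add: "continuous_map (prod_topology T0 T0) (T0::('v::euclidean_space set \<Rightarrow> int) topology) (\<lambda>(f, g). zadd f g)"
proof (rule cont_into_T0)
  fix x assume "x \<in> topspace (prod_topology (T0::('v set \<Rightarrow> int) topology) (T0::('v set \<Rightarrow> int) topology))"
  then show "(case x of (f, g) \<Rightarrow> zadd f g) \<in> ZK" by (auto simp: topspace_T0 zadd_eq ZK_add)
next
  fix p :: "'v set \<times> real"
  have "continuous_map (prod_topology (T0::('v set \<Rightarrow> int) topology) (T0::('v set \<Rightarrow> int) topology)) euclideanreal (\<lambda>x. Psi (fst x) p + Psi (snd x) p)"
    by (intro continuous_map_add continuous_map_compose[OF continuous_map_fst cont_Psi_coord, unfolded o_def]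
        continuous_map_compose[OF continuous_map_snd cont_Psi_coord, unfolded o_def])
  then show "continuous_map (prod_topology (T0::('v set \<Rightarrow> int) topology) T0) euclideanreal (\<lambda>x. Psi (case x of (f, g) \<Rightarrow> zadd f g) p)"
    by (rule continuous_map_eq) (auto simp: topspace_T0 zadd_eq Psi_add)
qed

lemma cont_T0_neg: "continuous_map T0 (T0::('v::euclidean_space set \<Rightarrow> int) topology) zneg"
proof (rule cont_into_T0)
  fix x assume "x \<in> topspace (T0::('v set \<Rightarrow> int) topology)"
  then show "zneg x \<in> ZK" by (auto simp: topspace_T0 zneg_eq ZK_neg)
next
  fix p :: "'v set \<times> real"
  have "continuous_map (T0::('v set \<Rightarrow> int) topology) euclideanreal (\<lambda>x. - Psi x p)"
    by (intro continuous_map_minus cont_Psi_coord)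
  then show "continuous_map T0 euclideanreal (\<lambda>x. Psi (zneg x) p)"
    by (simp add: zneg_eq Psi_neg)
qed

lemma Hausdorff_T0: "Hausdorff_space (T0::('v::euclidean_space set \<Rightarrow> int) topology)"
  unfolding Hausdorff_space_def
proof (intro allI impI)
  fix f g :: "'v set \<Rightarrow> int"
  assume a: "f \<in> topspace T0 \<and> g \<in> topspace T0 \<and> f \<noteq> g"
  then have ne: "Psi f \<noteq> Psi g" using Psi_inj by (auto simp: topspace_T0)
  have H: "Hausdorff_space (euclidean :: ('v set \<times> real \<Rightarrow> real) topology)"
    unfolding euclidean_product_topology[symmetric] Hausdorff_space_product_topology by simp
  then obtain U V where UV: "openin euclidean U" "openin euclidean V" "Psi f \<in> U" "Psi g \<in> V" "disjnt U V"
    using H[unfolded Hausdorff_space_def, rule_format, of "Psi f" "Psi g"] ne by auto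
  show "\<exists>U V. openin T0 U \<and> openin T0 V \<and> f \<in> U \<and> g \<in> V \<and> disjnt U V"
    apply (rule exI[of _ "Psi -` U \<inter> ZK"], rule exI[of _ "Psi -` V \<inter> ZK"])
    using UV a unfolding T0_def openin_pullback_topology
    by (auto simp: topspace_pullback_topology disjnt_iff)
qed

lemma hausdorff_group_T0: "hausdorff_group_topology (T0::('v::euclidean_space set \<Rightarrow> int) topology)"
  unfolding hausdorff_group_topology_def
  using topspace_T0 Hausdorff_T0 cont_T0_add cont_T0_neg by blast

lemma openin_Ktop: "openin Ktop U \<longleftrightarrow> U \<subseteq> Kset \<and>
      (\<forall>X\<in>U. \<exists>e>0. \<forall>Y\<in>Kset. hausdorff_dist X Y < e \<longrightarrow> Y \<in> U)"
proof -
  have "istopology (\<lambda>U. U \<subseteq> (Kset::'a set set) \<and>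
      (\<forall>X\<in>U. \<exists>e>0. \<forall>Y\<in>Kset. hausdorff_dist X Y < e \<longrightarrow> Y \<in> U))"
    unfolding istopology_def
  proof (rule conjI; intro allI impI)
    fix S T :: "'a set set"
    assume S: "S \<subseteq> Kset \<and> (\<forall>X\<in>S. \<exists>e>0. \<forall>Y\<in>Kset. hausdorff_dist X Y < e \<longrightarrow> Y \<in> S)"
      and T: "T \<subseteq> Kset \<and> (\<forall>X\<in>T. \<exists>e>0. \<forall>Y\<in>Kset. hausdorff_dist X Y < e \<longrightarrow> Y \<in> T)"
    show "S \<inter> T \<subseteq> Kset \<and> (\<forall>X\<in>S \<inter> T. \<exists>e>0. \<forall>Y\<in>Kset. hausdorff_dist X Y < e \<longrightarrow> Y \<in> S \<inter> T)"
    proof (intro conjI ballI)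
      show "S \<inter> T \<subseteq> Kset" using S by auto
      fix X assume "X \<in> S \<inter> T"
      then obtain e1 e2 where "e1 > 0" "\<forall>Y\<in>Kset. hausdorff_dist X Y < e1 \<longrightarrow> Y \<in> S"
        "e2 > 0" "\<forall>Y\<in>Kset. hausdorff_dist X Y < e2 \<longrightarrow> Y \<in> T" using S T by blast
      then show "\<exists>e>0. \<forall>Y\<in>Kset. hausdorff_dist X Y < e \<longrightarrow> Y \<in> S \<inter> T"
        by (intro exI[of _ "min e1 e2"]) auto
    qed
  next
    fix K :: "'a set set set"
    assume "\<forall>S\<in>K. S \<subseteq> Kset \<and> (\<forall>X\<in>S. \<exists>e>0. \<forall>Y\<in>Kset. hausdorff_dist X Y < e \<longrightarrow> Y \<in> S)"
    note K = this
    show "\<Union>K \<subseteq> Kset \<and> (\<forall>X\<in>\<Union>K. \<exists>e>0. \<forall>Y\<in>Kset. hausdorff_dist X Y < e \<longrightarrow> Y \<in> \<Union>K)"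
    proof (intro conjI ballI)
      show "\<Union>K \<subseteq> Kset" using K by auto
      fix X assume "X \<in> \<Union>K"
      then obtain S where S: "S \<in> K" "X \<in> S" by blast
      then obtain e where "e > 0" "\<forall>Y\<in>Kset. hausdorff_dist X Y < e \<longrightarrow> Y \<in> S" using K by blast
      then show "\<exists>e>0. \<forall>Y\<in>Kset. hausdorff_dist X Y < e \<longrightarrow> Y \<in> \<Union>K" using S by blast
    qed
  qed
  then show ?thesis unfolding Ktop_def by (simp add: topology_inverse')
qed

lemma topspace_Ktop: "topspace Ktop = Kset"
proof -
  have "openin Ktop Kset" unfolding openin_Ktop by (intro conjI ballI subset_refl exI[of _ "1::real"]) auto
  moreover have "\<And>U. openin Ktop U \<Longrightarrow> U \<subseteq> Kset" unfolding openin_Ktop by blast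
  ultimately show ?thesis unfolding topspace_def by blast
qed

lemma cont_Ktop_lipschitz:
  assumes "\<And>X Y. X \<in> Kset \<Longrightarrow> Y \<in> Kset \<Longrightarrow> \<bar>h X - h Y\<bar> \<le> hausdorff_dist X Y"
  shows "continuous_map Ktop euclideanreal h"
  unfolding continuous_map_def
proof (intro conjI allI impI)
  show "h \<in> topspace Ktop \<rightarrow> topspace euclideanreal" by simp
  fix U :: "real set" assume "openin euclideanreal U"
  then have oU: "open U" by simp
  show "openin Ktop {x \<in> topspace Ktop. h x \<in> U}"
    unfolding openin_Ktop topspace_Ktop
  proof (intro conjI ballI)
    show "{x \<in> Kset. h x \<in> U} \<subseteq> Kset" by auto
    fix X assume X: "X \<in> {x \<in> Kset. h x \<in> U}"
    then obtain e where e: "e > 0" "\<And>y. dist y (h X) < e \<Longrightarrow> y \<in> U"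
    proof -
      have "h X \<in> U" using X by simp
      then show ?thesis using oU that unfolding open_dist by blast
    qed
    show "\<exists>e>0. \<forall>Y\<in>Kset. hausdorff_dist X Y < e \<longrightarrow> Y \<in> {x \<in> Kset. h x \<in> U}"
    proof (intro exI[of _ e] conjI ballI impI)
      fix Y assume Y: "Y \<in> Kset" "hausdorff_dist X Y < e"
      have "\<bar>h Y - h X\<bar> \<le> hausdorff_dist Y X" using assms[of Y X] Y(1) X by simp
      then have "dist (h Y) (h X) < e" using Y(2) hd_sym[of X Y] by (simp add: dist_real_def)
      then show "Y \<in> {x \<in> Kset. h x \<in> U}" using e Y by auto
    qed (use e in auto)
  qed
qed

lemma cont_zgen_T0: "continuous_map (Ktop::'v::euclidean_space set topology) T0 zgen"
proof (rule cont_into_T0)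
  show "\<And>x. x \<in> topspace Ktop \<Longrightarrow> zgen x \<in> ZK" by (simp add: topspace_Ktop zgen_ZK)
  fix p :: "'v::euclidean_space set \<times> real"
  show "continuous_map Ktop euclideanreal (\<lambda>x. Psi (zgen x) p)"
    unfolding Psi_zgen bump_def
  proof (rule cont_Ktop_lipschitz)
    fix X Y :: "'v set" assume XY: "X \<in> Kset" "Y \<in> Kset"
    show "\<bar>(if fst p \<in> Kset then max 0 (snd p - hausdorff_dist X (fst p)) else 0) -
           (if fst p \<in> Kset then max 0 (snd p - hausdorff_dist Y (fst p)) else 0)\<bar> \<le> hausdorff_dist X Y"
    proof (cases "fst p \<in> Kset")
      case True
      have "hausdorff_dist X (fst p) \<le> hausdorff_dist X Y + hausdorff_dist Y (fst p)"
        by (rule hd_triangle[OF XY True])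
      moreover have "hausdorff_dist Y (fst p) \<le> hausdorff_dist Y X + hausdorff_dist X (fst p)"
        by (rule hd_triangle[OF XY(2,1) True])
      ultimately show ?thesis using True hd_sym[of X Y] by auto
    qed (use hd_nonneg[OF XY] in auto)
  qed
qed

definition TT :: "('v::euclidean_space set \<Rightarrow> int) topology set" where
  "TT = {T. hausdorff_group_topology T \<and> continuous_map Ktop T zgen}"

lemma FZtop_eq: "FZtop = topology_generated_by (\<Union>{{U. openin T U} | T. T \<in> TT})"
  unfolding FZtop_def TT_def by simp

lemma T0_TT: "T0 \<in> TT"
  unfolding TT_def using hausdorff_group_T0 cont_zgen_T0 by blast

lemma TT_topspace: "T \<in> TT \<Longrightarrow> topspace T = ZK"
  unfolding TT_def hausdorff_group_topology_def by blast

lemma topspace_FZtop: "topspace (FZtop::('v::euclidean_space set \<Rightarrow> int) topology) = ZK"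
proof -
  have "\<Union>(\<Union>{{U. openin T U} | T. T \<in> (TT::('v set \<Rightarrow> int) topology set)}) = ZK"
  proof
    show "\<Union>(\<Union>{{U. openin T U} | T. T \<in> (TT::('v set \<Rightarrow> int) topology set)}) \<subseteq> ZK"
      using TT_topspace openin_subset by fastforce
    have "ZK \<in> {U. openin T0 U}" using topspace_T0 openin_topspace by (metis mem_Collect_eq)
    then show "ZK \<subseteq> \<Union>(\<Union>{{U. openin T U} | T. T \<in> (TT::('v set \<Rightarrow> int) topology set)})"
      using T0_TT by blast
  qed
  then show ?thesis unfolding FZtop_eq topology_generated_by_topspace .
qed

lemma cont_FZ_T:
  fixes T :: "('v::euclidean_space set \<Rightarrow> int) topology"
  assumes "T \<in> TT"
  shows "continuous_map FZtop T (\<lambda>x. x)"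
  unfolding continuous_map_def
proof (intro conjI allI impI)
  show "(\<lambda>x. x) \<in> topspace FZtop \<rightarrow> topspace T" using assms by (simp add: topspace_FZtop TT_topspace)
  fix U :: "('v set \<Rightarrow> int) set" assume "openin T U"
  then have "openin FZtop U" unfolding FZtop_eq
    by (intro topology_generated_by_Basis) (use assms in blast)
  moreover have "{x \<in> topspace FZtop. x \<in> U} = U" using openin_subset[OF \<open>openin FZtop U\<close>] by auto
  ultimately show "openin FZtop {x \<in> topspace FZtop. x \<in> U}" by simp
qed

lemma cont_into_FZ:
  fixes f :: "'a \<Rightarrow> 'v::euclidean_space set \<Rightarrow> int"
  assumes "\<And>T. T \<in> TT \<Longrightarrow> continuous_map X T f" "\<And>x. x \<in> topspace X \<Longrightarrow> f x \<in> ZK"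
  shows "continuous_map X FZtop f"
  unfolding continuous_map_def
proof (intro conjI allI impI)
  show "f \<in> topspace X \<rightarrow> topspace FZtop" using assms(2) by (simp add: topspace_FZtop)
  fix U :: "('v set \<Rightarrow> int) set" assume "openin FZtop U"
  then have "generate_topology_on (\<Union>{{U. openin T U} | T. T \<in> TT}) U"
    unfolding FZtop_eq by (rule openin_topology_generated_by)
  then show "openin X {x \<in> topspace X. f x \<in> U}"
  proof induction
    case Empty then show ?case by simp
  next
    case (Int a b)
    have "{x \<in> topspace X. f x \<in> a \<inter> b} = {x \<in> topspace X. f x \<in> a} \<inter> {x \<in> topspace X. f x \<in> b}" by auto
    then show ?case using Int by auto
  next
    case (UN K)
    have "{x \<in> topspace X. f x \<in> \<Union>K} = (\<Union>k\<in>K. {x \<in> topspace X. f x \<in> k})" by auto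
    then show ?case using UN by auto
  next
    case (Basis s)
    then obtain T where "T \<in> TT" "openin T s" by blast
    then show ?case using assms(1) openin_continuous_map_preimage by blast
  qed
qed

lemma cont_FZ_add: "continuous_map (prod_topology FZtop FZtop) (FZtop::('v::euclidean_space set \<Rightarrow> int) topology) (\<lambda>z. zadd (fst z) (snd z))"
proof (rule cont_into_FZ)
  fix T :: "('v set \<Rightarrow> int) topology" assume T: "T \<in> TT"
  have "continuous_map (prod_topology FZtop FZtop) (prod_topology T T) (\<lambda>z. (fst z, snd z))"
    by (rule continuous_map_pairedI[OF continuous_map_compose[OF continuous_map_fst cont_FZ_T[OF T], unfolded o_def]
          continuous_map_compose[OF continuous_map_snd cont_FZ_T[OF T], unfolded o_def]])
  moreover have "continuous_map (prod_topology T T) T (\<lambda>(f, g). zadd f g)"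
    using T unfolding TT_def hausdorff_group_topology_def by blast
  ultimately have "continuous_map (prod_topology FZtop FZtop) T ((\<lambda>(f, g). zadd f g) \<circ> (\<lambda>z. (fst z, snd z)))"
    by (rule continuous_map_compose)
  then show "continuous_map (prod_topology FZtop FZtop) T (\<lambda>z. zadd (fst z) (snd z))"
    by (simp add: o_def split_def)
next
  fix x :: "('v set \<Rightarrow> int) \<times> ('v set \<Rightarrow> int)"
  assume "x \<in> topspace (prod_topology FZtop FZtop)"
  then show "zadd (fst x) (snd x) \<in> ZK" by (auto simp: topspace_FZtop zadd_eq ZK_add)
qed

lemma cont_FZ_neg: "continuous_map FZtop (FZtop::('v::euclidean_space set \<Rightarrow> int) topology) zneg"
proof (rule cont_into_FZ)
  fix T :: "('v set \<Rightarrow> int) topology" assume T: "T \<in> TT"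
  have "continuous_map T T zneg"
    using T unfolding TT_def hausdorff_group_topology_def by blast
  from continuous_map_compose[OF cont_FZ_T[OF T] this] show "continuous_map FZtop T zneg"
    by (simp add: o_def)
next
  fix x :: "'v set \<Rightarrow> int"
  assume "x \<in> topspace FZtop"
  then show "zneg x \<in> ZK" by (auto simp: topspace_FZtop zneg_eq ZK_neg)
qed

lemma zspan_zero: "zzero \<in> zspan A" unfolding zspan_def by blast
lemma zspan_add: "f \<in> zspan A \<Longrightarrow> g \<in> zspan A \<Longrightarrow> zadd f g \<in> zspan A" unfolding zspan_def by blast
lemma zspan_neg: "f \<in> zspan A \<Longrightarrow> zneg f \<in> zspan A" unfolding zspan_def by blast

lemma CBker_sub: "CBker G \<subseteq> ZK"
  unfolding CBker_def using closure_of_subset_topspace topspace_FZtop by metis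

lemma CBker_zero: "(0::'v::euclidean_space set \<Rightarrow> int) \<in> CBker G"
proof -
  let ?H = "topspace FZtop \<inter> zspan (CBrels G)"
  have "(0::'v set \<Rightarrow> int) \<in> ?H" using zspan_zero[of "CBrels G", unfolded zzero_eq] ZK_zero by (simp add: topspace_FZtop)
  moreover have "?H \<subseteq> FZtop closure_of ?H" by (rule closure_of_subset) auto
  ultimately show ?thesis unfolding CBker_def by (metis closure_of_restrict subsetD)
qed

lemma CBker_add:
  assumes "f \<in> CBker G" "g \<in> CBker G"
  shows "f + g \<in> CBker G"
proof -
  let ?H = "topspace FZtop \<inter> zspan (CBrels G)"
  let ?a = "\<lambda>z. zadd (fst z) (snd z)"
  have K: "CBker G = FZtop closure_of ?H" unfolding CBker_def by (rule closure_of_restrict)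
  have "(f, g) \<in> (FZtop closure_of ?H) \<times> (FZtop closure_of ?H)" using assms K by simp
  then have mem: "(f, g) \<in> prod_topology FZtop FZtop closure_of (?H \<times> ?H)"
    by (simp only: closure_of_Times)
  have sub: "?a ` (prod_topology FZtop FZtop closure_of (?H \<times> ?H)) \<subseteq> FZtop closure_of (?a ` (?H \<times> ?H))"
    by (rule continuous_map_image_closure_subset[OF cont_FZ_add])
  have m1: "?a (f, g) \<in> FZtop closure_of (?a ` (?H \<times> ?H))"
    by (rule subsetD[OF sub imageI[OF mem]])
  have m2: "?a ` (?H \<times> ?H) \<subseteq> ?H"
  proof
    fix w assume "w \<in> ?a ` (?H \<times> ?H)"
    then obtain u v where uv: "u \<in> ?H" "v \<in> ?H" "w = zadd u v" by auto
    then show "w \<in> ?H" using zspan_add[of u "CBrels G" v] ZK_add[of u v]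
      by (simp add: topspace_FZtop zadd_eq)
  qed
  have "?a (f, g) \<in> FZtop closure_of ?H" by (rule subsetD[OF closure_of_mono[OF m2] m1])
  then have "zadd f g \<in> FZtop closure_of ?H" by simp
  then show ?thesis using K by (simp add: zadd_eq)
qed

lemma CBker_neg:
  assumes "f \<in> CBker G"
  shows "- f \<in> CBker G"
proof -
  let ?H = "topspace FZtop \<inter> zspan (CBrels G)"
  have K: "CBker G = FZtop closure_of ?H" unfolding CBker_def by (rule closure_of_restrict)
  have sub: "zneg ` (FZtop closure_of ?H) \<subseteq> FZtop closure_of (zneg ` ?H)"
    by (rule continuous_map_image_closure_subset[OF cont_FZ_neg])
  have "zneg f \<in> FZtop closure_of (zneg ` ?H)"
    by (rule subsetD[OF sub imageI]) (use assms K in simp)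
  moreover have "zneg ` ?H \<subseteq> ?H"
  proof
    fix w assume "w \<in> zneg ` ?H"
    then obtain u where u: "u \<in> ?H" "w = zneg u" by auto
    then show "w \<in> ?H" using zspan_neg[of u "CBrels G"] ZK_neg[of u]
      by (simp add: topspace_FZtop zneg_eq)
  qed
  ultimately have "zneg f \<in> FZtop closure_of ?H" by (meson closure_of_mono subsetD)
  then show ?thesis using K by (simp add: zneg_eq)
qed

lemma CBker_diff: "f \<in> CBker G \<Longrightarrow> g \<in> CBker G \<Longrightarrow> f - g \<in> CBker G"
  using CBker_add[OF _ CBker_neg] by (metis diff_conv_add_uminus)

locale agrp =
  fixes S :: "'a set" and p :: "'a \<Rightarrow> 'a \<Rightarrow> 'a" and z :: 'a and n :: "'a \<Rightarrow> 'a"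
  assumes closed: "x \<in> S \<Longrightarrow> y \<in> S \<Longrightarrow> p x y \<in> S"
    and z_in: "z \<in> S"
    and n_in: "x \<in> S \<Longrightarrow> n x \<in> S"
    and assoc: "x \<in> S \<Longrightarrow> y \<in> S \<Longrightarrow> w \<in> S \<Longrightarrow> p (p x y) w = p x (p y w)"
    and comm: "x \<in> S \<Longrightarrow> y \<in> S \<Longrightarrow> p x y = p y x"
    and lid: "x \<in> S \<Longrightarrow> p z x = x"
    and linv: "x \<in> S \<Longrightarrow> p (n x) x = z"
begin

lemma rid: "x \<in> S \<Longrightarrow> p x z = x"
  using comm lid z_in by metis

lemma rinv: "x \<in> S \<Longrightarrow> p x (n x) = z"
  using comm linv n_in by metis

lemma lcomm: "x \<in> S \<Longrightarrow> y \<in> S \<Longrightarrow> w \<in> S \<Longrightarrow> p x (p y w) = p y (p x w)"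
  using assoc comm by metis

lemma cancel: "a \<in> S \<Longrightarrow> b \<in> S \<Longrightarrow> c \<in> S \<Longrightarrow> p a b = p a c \<Longrightarrow> b = c"
proof -
  assume S: "a \<in> S" "b \<in> S" "c \<in> S" and e: "p a b = p a c"
  have "p (n a) (p a b) = p (n a) (p a c)" using e by simp
  then show "b = c" using S by (simp add: assoc[symmetric] n_in linv lid)
qed

lemma absorb: "a \<in> S \<Longrightarrow> c \<in> S \<Longrightarrow> p a c = a \<Longrightarrow> c = z"
  using cancel[of a c z] rid z_in by metis

lemma diff_z: "a \<in> S \<Longrightarrow> b \<in> S \<Longrightarrow> p a (n b) = z \<Longrightarrow> a = b"
proof -
  assume S: "a \<in> S" "b \<in> S" and e: "p a (n b) = z"
  have "p (p a (n b)) b = p z b" using e by simp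
  then show "a = b" using S by (simp add: assoc n_in linv rid lid)
qed

lemma n_p: "a \<in> S \<Longrightarrow> b \<in> S \<Longrightarrow> n (p a b) = p (n a) (n b)"
proof -
  assume S: "a \<in> S" "b \<in> S"
  have "p (p a b) (p (n a) (n b)) = p (p a (n a)) (p b (n b))"
    using S by (metis assoc lcomm n_in closed)
  also have "\<dots> = z" using S by (simp add: rinv lid z_in)
  finally have "p (p a b) (p (n a) (n b)) = p (p a b) (n (p a b))" using S by (simp add: rinv closed)
  then show ?thesis using cancel S closed n_in by metis
qed

lemma n_z: "n z = z"
  using rid[OF n_in[OF z_in]] linv[OF z_in] by simp

lemma swap4: "a \<in> S \<Longrightarrow> b \<in> S \<Longrightarrow> c \<in> S \<Longrightarrow> d \<in> S \<Longrightarrow> p (p a b) (p c d) = p (p a c) (p b d)"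
  by (metis assoc lcomm closed)

lemma mixed: "a \<in> S \<Longrightarrow> b \<in> S \<Longrightarrow> c \<in> S \<Longrightarrow> d \<in> S \<Longrightarrow>
   p (p a b) (n (p c d)) = p (p a (n c)) (p b (n d))"
  by (simp add: n_p swap4 n_in)

lemma is_in: "(\<forall>i\<in>{1..d}. f i \<in> S) \<Longrightarrow> b \<in> S \<Longrightarrow> iter_sum p f b d \<in> S"
  by (induction d) (auto simp: closed)

lemma is_cong: "(\<forall>i\<in>{1..d}. f i = g i) \<Longrightarrow> iter_sum p f b d = iter_sum p g b d"
  by (induction d) auto

lemma is_zero: "(\<forall>i\<in>{1..d}. f i = z) \<Longrightarrow> iter_sum p f z d = z"
  by (induction d) (auto simp: rid z_in)

lemma is_mult:
  "(\<forall>i\<in>{1..d}. f i \<in> S) \<Longrightarrow> (\<forall>i\<in>{1..d}. g i \<in> S) \<Longrightarrow> a \<in> S \<Longrightarrow> b \<in> S \<Longrightarrow>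
   iter_sum p (\<lambda>i. p (f i) (g i)) (p a b) d = p (iter_sum p f a d) (iter_sum p g b d)"
proof (induction d)
  case 0 then show ?case by simp
next
  case (Suc d)
  then have IH: "iter_sum p (\<lambda>i. p (f i) (g i)) (p a b) d = p (iter_sum p f a d) (iter_sum p g b d)" by auto
  have "iter_sum p f a d \<in> S" "iter_sum p g b d \<in> S" using Suc.prems by (auto intro!: is_in)
  moreover have "f (Suc d) \<in> S" "g (Suc d) \<in> S" using Suc.prems by auto
  ultimately show ?case using IH by (simp add: swap4)
qed

lemma is_inv:
  "(\<forall>i\<in>{1..d}. f i \<in> S) \<Longrightarrow> a \<in> S \<Longrightarrow>
   iter_sum p (\<lambda>i. n (f i)) (n a) d = n (iter_sum p f a d)"
proof (induction d)
  case 0 then show ?case by simp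
next
  case (Suc d)
  then have IH: "iter_sum p (\<lambda>i. n (f i)) (n a) d = n (iter_sum p f a d)" by auto
  have "iter_sum p f a d \<in> S" using Suc.prems by (auto intro!: is_in)
  moreover have "f (Suc d) \<in> S" using Suc.prems by auto
  ultimately show ?case using IH by (simp add: n_p)
qed

lemma is_base:
  "(\<forall>i\<in>{1..d}. f i \<in> S) \<Longrightarrow> a \<in> S \<Longrightarrow> iter_sum p f a d = p a (iter_sum p f z d)"
proof (induction d)
  case 0 then show ?case by (simp add: rid)
next
  case (Suc d)
  then have IH: "iter_sum p f a d = p a (iter_sum p f z d)" by auto
  have "iter_sum p f z d \<in> S" using Suc.prems z_in by (auto intro!: is_in)
  moreover have "f (Suc d) \<in> S" using Suc.prems by auto
  ultimately show ?case using IH Suc.prems by (simp add: assoc)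
qed

lemma is_diff:
  "(\<forall>i\<in>{1..d}. f i \<in> S) \<Longrightarrow> (\<forall>i\<in>{1..d}. g i \<in> S) \<Longrightarrow> a \<in> S \<Longrightarrow> b \<in> S \<Longrightarrow>
   iter_sum p (\<lambda>i. p (f i) (n (g i))) (p a (n b)) d = p (iter_sum p f a d) (n (iter_sum p g b d))"
  using is_mult[of d f "\<lambda>i. n (g i)" a "n b"] is_inv[of d g b] by (simp add: n_in)

lemma add_zero:
  fixes e :: "real \<Rightarrow> 'a"
  assumes "\<forall>a\<ge>0. \<forall>b\<ge>0. e (a + b) = p (e a) (e b)" "\<forall>t\<ge>0. e t \<in> S"
  shows "e 0 = z"
proof -
  have "e (0 + 0) = p (e 0) (e 0)" using assms(1)[rule_format, of 0 0] by simp
  then have "p (e 0) (e 0) = e 0" by simp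
  moreover have "e 0 \<in> S" using assms(2) by simp
  ultimately show ?thesis using absorb by blast
qed

lemma core:
  "\<And>e. (\<forall>i\<in>{1..d}. \<forall>t\<ge>0. e i t \<in> S) \<Longrightarrow>
       (\<forall>i\<in>{1..d}. \<forall>a\<ge>0. \<forall>b\<ge>0. e i (a + b) = p (e i a) (e i b)) \<Longrightarrow>
       (\<forall>l\<ge>0. iter_sum p (\<lambda>i. e i (l ^ i)) z d = z) \<Longrightarrow>
       \<forall>i\<in>{1..d}. \<forall>t\<ge>0. e i (t::real) = z"
proof (induction d)
  case 0 then show ?case by simp
next
  case (Suc d)
  fix e :: "nat \<Rightarrow> real \<Rightarrow> 'a"
  assume ein: "\<forall>i\<in>{1..Suc d}. \<forall>t\<ge>0. e i t \<in> S"
    and eadd: "\<forall>i\<in>{1..Suc d}. \<forall>a\<ge>0. \<forall>b\<ge>0. e i (a + b) = p (e i a) (e i b)"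
    and F: "\<forall>l\<ge>0. iter_sum p (\<lambda>i. e i (l ^ i)) z (Suc d) = z"
  let ?N = "(2::real) ^ Suc d"
  have dbl: "iter_sum p (\<lambda>i. e i (2 ^ k * l ^ i)) z (Suc d) = z" if "l \<ge> 0" for k l
  proof (induction k)
    case 0 then show ?case using F that by simp
  next
    case (Suc k)
    have "iter_sum p (\<lambda>i. e i (2 ^ Suc k * l ^ i)) z (Suc d)
        = iter_sum p (\<lambda>i. p (e i (2 ^ k * l ^ i)) (e i (2 ^ k * l ^ i))) (p z z) (Suc d)"
    proof -
      have "iter_sum p (\<lambda>i. e i (2 ^ Suc k * l ^ i)) z (Suc d)
          = iter_sum p (\<lambda>i. p (e i (2 ^ k * l ^ i)) (e i (2 ^ k * l ^ i))) z (Suc d)"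
      proof (rule is_cong, intro ballI)
        fix i assume i: "i \<in> {1..Suc d}"
        have nn: "(2::real) ^ k * l ^ i \<ge> 0" using that by simp
        have eq: "(2::real) ^ Suc k * l ^ i = 2 ^ k * l ^ i + 2 ^ k * l ^ i" by simp
        have "e i (2 ^ k * l ^ i + 2 ^ k * l ^ i) = p (e i (2 ^ k * l ^ i)) (e i (2 ^ k * l ^ i))"
          using eadd i nn by blast
        then show "e i (2 ^ Suc k * l ^ i) = p (e i (2 ^ k * l ^ i)) (e i (2 ^ k * l ^ i))"
          by (simp only: eq)
      qed
      moreover have "p z z = z" using lid z_in by simp
      ultimately show ?thesis by simp
    qed
    also have "\<dots> = p (iter_sum p (\<lambda>i. e i (2 ^ k * l ^ i)) z (Suc d)) (iter_sum p (\<lambda>i. e i (2 ^ k * l ^ i)) z (Suc d))"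
      using ein that z_in by (intro is_mult) auto
    also have "\<dots> = z" using Suc.IH z_in lid by simp
    finally show ?case .
  qed
  define e' where "e' i t = p (e i (2 ^ i * t)) (n (e i (?N * t)))" for i t
  have e'in: "\<forall>i\<in>{1..d}. \<forall>t\<ge>0. e' i t \<in> S"
    using ein by (auto simp: e'_def intro!: closed n_in)
  have e'add: "\<forall>i\<in>{1..d}. \<forall>a\<ge>0. \<forall>b\<ge>0. e' i (a + b) = p (e' i a) (e' i b)"
  proof (intro ballI allI impI)
    fix i and a b :: real assume i: "i \<in> {1..d}" and ab: "a \<ge> 0" "b \<ge> 0"
    have i': "i \<in> {1..Suc d}" using i by auto
    have "e' i (a + b) = p (p (e i (2 ^ i * a)) (e i (2 ^ i * b))) (n (p (e i (?N * a)) (e i (?N * b))))"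
      unfolding e'_def using eadd i' ab by (simp add: distrib_left)
    also have "\<dots> = p (e' i a) (e' i b)"
      unfolding e'_def using ein i' ab by (intro mixed) auto
    finally show "e' i (a + b) = p (e' i a) (e' i b)" .
  qed
  have e'F: "\<forall>l\<ge>0. iter_sum p (\<lambda>i. e' i (l ^ i)) z d = z"
  proof (intro allI impI)
    fix l :: real assume l: "l \<ge> 0"
    have A: "iter_sum p (\<lambda>i. e i (2 ^ i * l ^ i)) z (Suc d) = z"
    proof -
      have "0 \<le> 2 * l" using l by simp
      from F[rule_format, OF this] show ?thesis by (simp only: power_mult_distrib)
    qed
    have B: "iter_sum p (\<lambda>i. e i (?N * l ^ i)) z (Suc d) = z"
      using dbl[OF l, of "Suc d"] by simp
    have "iter_sum p (\<lambda>i. p (e i (2 ^ i * l ^ i)) (n (e i (?N * l ^ i)))) (p z (n z)) (Suc d)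
        = p (iter_sum p (\<lambda>i. e i (2 ^ i * l ^ i)) z (Suc d)) (n (iter_sum p (\<lambda>i. e i (?N * l ^ i)) z (Suc d)))"
      using ein l z_in by (intro is_diff) auto
    also have "\<dots> = z" using A B n_z lid z_in by simp
    finally have C: "iter_sum p (\<lambda>i. p (e i (2 ^ i * l ^ i)) (n (e i (?N * l ^ i)))) z (Suc d) = z"
      using n_z lid z_in by simp
    have last: "p (e (Suc d) (2 ^ Suc d * l ^ Suc d)) (n (e (Suc d) (?N * l ^ Suc d))) = z"
      using ein l by (intro rinv) auto
    have "iter_sum p (\<lambda>i. p (e i (2 ^ i * l ^ i)) (n (e i (?N * l ^ i)))) z d = iter_sum p (\<lambda>i. e' i (l ^ i)) z d"
      by (intro is_cong) (simp add: e'_def)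
    moreover have "iter_sum p (\<lambda>i. e' i (l ^ i)) z d \<in> S"
      using e'in l z_in by (intro is_in) auto
    ultimately show "iter_sum p (\<lambda>i. e' i (l ^ i)) z d = z"
      using C last by (simp add: rid)
  qed
  have e'z: "\<forall>i\<in>{1..d}. \<forall>t\<ge>0. e' i t = z" by (rule Suc.IH[OF e'in e'add e'F])
  have lower: "e i s = z" if i: "i \<in> {1..d}" and s: "s \<ge> 0" for i s
  proof -
    have i': "i \<in> {1..Suc d}" using i by auto
    have pos: "?N - 2 ^ i > 0"
    proof -
      have "(2::real) ^ i < 2 ^ Suc d" using i by (intro power_strict_increasing) auto
      then show ?thesis by simp
    qed
    define t where "t = s / (?N - 2 ^ i)"
    have t: "t \<ge> 0" using s pos by (simp add: t_def)
    have st: "s = (?N - 2 ^ i) * t" using pos by (simp add: t_def)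
    have n1: "(2::real) ^ i * t \<ge> 0" using t by simp
    have n2: "?N * t \<ge> 0" using t by simp
    have n3: "(?N - 2 ^ i) * t \<ge> 0" using t pos by simp
    have m1: "e i (2 ^ i * t) \<in> S" using ein i' n1 by blast
    have m2: "e i (?N * t) \<in> S" using ein i' n2 by blast
    have m3: "e i ((?N - 2 ^ i) * t) \<in> S" using ein i' n3 by blast
    have "e' i t = z" using e'z i t by blast
    then have "p (e i (2 ^ i * t)) (n (e i (?N * t))) = z" by (simp only: e'_def)
    then have eq: "e i (2 ^ i * t) = e i (?N * t)" using diff_z m1 m2 by blast
    have sp: "?N * t = 2 ^ i * t + (?N - 2 ^ i) * t" by (simp add: algebra_simps)
    have "e i (2 ^ i * t + (?N - 2 ^ i) * t) = p (e i (2 ^ i * t)) (e i ((?N - 2 ^ i) * t))"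
      using eadd i' n1 n3 by blast
    then have "p (e i (2 ^ i * t)) (e i ((?N - 2 ^ i) * t)) = e i (2 ^ i * t)"
      using eq sp by simp
    then have "e i ((?N - 2 ^ i) * t) = z"
      using absorb m1 m3 by blast
    then show ?thesis using st by simp
  qed
  have top: "e (Suc d) s = z" if s: "s \<ge> 0" for s
  proof -
    define l where "l = root (Suc d) s"
    have l1: "l \<ge> 0" using s unfolding l_def by simp
    have l2: "l ^ Suc d = s" using s unfolding l_def by (intro real_root_pow_pos2) auto
    note l = l1 l2
    have "iter_sum p (\<lambda>i. e i (l ^ i)) z d = z"
      using lower l(1) by (intro is_zero) auto
    then have "p z (e (Suc d) s) = z" using F l by auto
    then show ?thesis using lid ein s by auto
  qed
  show "\<forall>i\<in>{1..Suc d}. \<forall>t\<ge>0. e i t = z"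
  proof (intro ballI allI impI)
    fix i t assume "i \<in> {1..Suc d}" "(t::real) \<ge> 0"
    then show "e i t = z" using lower top by (cases "i = Suc d") auto
  qed
qed

end

lemma cls_alt: "cls G f = {g \<in> ZK. g - f \<in> CBker G}"
  by (simp add: cls_def zadd_eq zneg_eq)

lemma cls_add:
  assumes f: "f \<in> ZK" and g: "g \<in> ZK"
  shows "cbadd (cls G f) (cls G g) = cls G (f + g)"
proof
  show "cbadd (cls G f) (cls G g) \<subseteq> cls G (f + g)"
  proof
    fix w assume "w \<in> cbadd (cls G f) (cls G g)"
    then obtain a b where ab: "w = zadd a b" "a \<in> cls G f" "b \<in> cls G g" unfolding cbadd_def by blast
    then have h: "a \<in> ZK" "b \<in> ZK" "a - f \<in> CBker G" "b - g \<in> CBker G" by (auto simp: cls_alt)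
    have eq: "(a - f) + (b - g) = a + b - (f + g)" by simp
    have "a + b - (f + g) \<in> CBker G" using CBker_add[OF h(3,4)] unfolding eq .
    then show "w \<in> cls G (f + g)" using ab(1) h by (auto simp: cls_alt zadd_eq ZK_add)
  qed
next
  show "cls G (f + g) \<subseteq> cbadd (cls G f) (cls G g)"
  proof
    fix c assume "c \<in> cls G (f + g)"
    then have c: "c \<in> ZK" "c - (f + g) \<in> CBker G" by (auto simp: cls_alt)
    have "c - g \<in> cls G f" using c g by (auto simp: cls_alt ZK_diff diff_diff_eq add.commute)
    moreover have "g \<in> cls G g" using g CBker_zero by (auto simp: cls_alt)
    moreover have "c = zadd (c - g) g" by (simp add: zadd_eq)
    ultimately show "c \<in> cbadd (cls G f) (cls G g)" unfolding cbadd_def by blast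
  qed
qed

definition cbneg :: "('v::euclidean_space \<Rightarrow> 'v) set \<Rightarrow> ('v set \<Rightarrow> int) set \<Rightarrow> ('v set \<Rightarrow> int) set" where
  "cbneg G x = cls G (- (SOME f. f \<in> ZK \<and> x = cls G f))"

lemma CB_rep: "x \<in> CB G \<Longrightarrow> \<exists>f. f \<in> ZK \<and> x = cls G f"
  unfolding CB_def by blast

lemma cbneg_rep:
  assumes "x \<in> CB G"
  obtains f where "f \<in> ZK" "x = cls G f" "cbneg G x = cls G (- f)"
proof -
  let ?f = "SOME f. f \<in> ZK \<and> x = cls G f"
  have "?f \<in> ZK \<and> x = cls G ?f" using someI_ex[OF CB_rep[OF assms]] .
  then show ?thesis using that unfolding cbneg_def by blast
qed

lemma cls_in: "f \<in> ZK \<Longrightarrow> cls G f \<in> CB G"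
  unfolding CB_def by blast

lemma CB_agrp: "agrp (CB G) cbadd (cls G 0) (cbneg G)"
proof
  fix x y assume "x \<in> CB G" "y \<in> CB G"
  then obtain f g where "f \<in> ZK" "g \<in> ZK" "x = cls G f" "y = cls G g" using CB_rep by metis
  then show "cbadd x y \<in> CB G" by (simp add: cls_add cls_in ZK_add)
next
  show "cls G 0 \<in> CB G" by (simp add: cls_in ZK_zero)
next
  fix x assume "x \<in> CB G"
  then obtain f where "f \<in> ZK" "cbneg G x = cls G (- f)" using cbneg_rep by metis
  then show "cbneg G x \<in> CB G" by (simp add: cls_in ZK_neg)
next
  fix x y w assume "x \<in> CB G" "y \<in> CB G" "w \<in> CB G"
  then obtain f g h where "f \<in> ZK" "g \<in> ZK" "h \<in> ZK" "x = cls G f" "y = cls G g" "w = cls G h"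
    using CB_rep by metis
  then show "cbadd (cbadd x y) w = cbadd x (cbadd y w)" by (simp add: cls_add ZK_add add.assoc)
next
  fix x y assume "x \<in> CB G" "y \<in> CB G"
  then obtain f g where "f \<in> ZK" "g \<in> ZK" "x = cls G f" "y = cls G g" using CB_rep by metis
  then show "cbadd x y = cbadd y x" by (simp add: cls_add add.commute)
next
  fix x assume "x \<in> CB G"
  then obtain f where "f \<in> ZK" "x = cls G f" using CB_rep by metis
  then show "cbadd (cls G 0) x = x" by (simp add: cls_add ZK_zero)
next
  fix x assume "x \<in> CB G"
  then obtain f where "f \<in> ZK" "x = cls G f" "cbneg G x = cls G (- f)" using cbneg_rep by metis
  then show "cbadd (cbneg G x) x = cls G 0" by (simp add: cls_add ZK_neg)
qed

lemma topspace_CBtop: "topspace (CBtop G) = CB G"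
proof -
  let ?P = "\<lambda>U. U \<subseteq> CB G \<and> openin FZtop {f \<in> ZK. cls G f \<in> U}"
  have ist: "istopology ?P"
    unfolding istopology_def
  proof (rule conjI; intro allI impI)
    fix S T assume S: "?P S" and T: "?P T"
    have "{f \<in> ZK. cls G f \<in> S \<inter> T} = {f \<in> ZK. cls G f \<in> S} \<inter> {f \<in> ZK. cls G f \<in> T}" by auto
    then show "?P (S \<inter> T)" using S T by auto
  next
    fix K assume K: "\<forall>U\<in>K. ?P U"
    have "{f \<in> ZK. cls G f \<in> \<Union>K} = (\<Union>U\<in>K. {f \<in> ZK. cls G f \<in> U})" by auto
    then show "?P (\<Union>K)" using K by auto
  qed
  have op: "openin (CBtop G) U \<longleftrightarrow> ?P U" for U
    unfolding CBtop_def using topology_inverse'[OF ist] by simp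
  have "?P (CB G)"
  proof -
    have "{f \<in> ZK. cls G f \<in> CB G} = topspace FZtop" by (auto simp: topspace_FZtop cls_in)
    then show ?thesis by simp
  qed
  then show ?thesis unfolding topspace_def using op by auto
qed

lemma topspace_RCBtop: "topspace (RCBtop G) = {0..} \<times> CB G"
  by (simp add: RCBtop_def topspace_CBtop)

theorem proposition6p3:
  fixes G :: "('v::euclidean_space \<Rightarrow> 'v) set"
    and D :: "real \<Rightarrow> ('v set \<Rightarrow> int) set \<Rightarrow> ('v set \<Rightarrow> int) set"
    and \<rho>0 :: "('v set \<Rightarrow> int) set \<Rightarrow> ('v set \<Rightarrow> int) set"
    and \<rho> :: "nat \<Rightarrow> real \<Rightarrow> ('v set \<Rightarrow> int) set \<Rightarrow> ('v set \<Rightarrow> int) set"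
  assumes "affine_group_with_translations G"
    and "is_dilation_map G D"
    and "are_dilation_components G D \<rho>0 \<rho>"
  shows "(\<forall>x\<in>CB G. \<forall>y\<in>CB G. \<rho>0 (cbadd x y) = cbadd (\<rho>0 x) (\<rho>0 y)) \<and>
         (\<forall>i\<in>{1..DIM('v)}. \<forall>l\<ge>0. \<forall>x\<in>CB G. \<forall>y\<in>CB G.
            \<rho> i l (cbadd x y) = cbadd (\<rho> i l x) (\<rho> i l y))"
proof -
  interpret M: agrp "CB G" cbadd "cls G 0" "cbneg G" by (rule CB_agrp)
  let ?d = "DIM('v)"
  let ?p = cbadd and ?z = "cls G 0" and ?n = "cbneg G"
  have r0c: "continuous_map (CBtop G) (CBtop G) \<rho>0"
    and ric: "\<And>i. i \<in> {1..?d} \<Longrightarrow> continuous_map (RCBtop G) (CBtop G) (\<lambda>(l, x). \<rho> i l x)"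
    and radd: "\<And>i x a b. i \<in> {1..?d} \<Longrightarrow> x \<in> CB G \<Longrightarrow> a \<ge> 0 \<Longrightarrow> b \<ge> 0 \<Longrightarrow>
                 \<rho> i (a + b) x = cbadd (\<rho> i a x) (\<rho> i b x)"
    and Dexp: "\<And>l x. l \<ge> 0 \<Longrightarrow> x \<in> CB G \<Longrightarrow> D l x = iter_sum cbadd (\<lambda>i. \<rho> i (l ^ i) x) (\<rho>0 x) ?d"
    using assms(3) unfolding are_dilation_components_def by blast+
  have Dadd: "\<And>l x y. l \<ge> 0 \<Longrightarrow> x \<in> CB G \<Longrightarrow> y \<in> CB G \<Longrightarrow> D l (cbadd x y) = cbadd (D l x) (D l y)"
    using assms(2) unfolding is_dilation_map_def by blast
  have r0in: "\<And>x. x \<in> CB G \<Longrightarrow> \<rho>0 x \<in> CB G"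
    using continuous_map_image_subset_topspace[OF r0c] topspace_CBtop by blast
  have riin: "\<And>i l x. i \<in> {1..?d} \<Longrightarrow> l \<ge> 0 \<Longrightarrow> x \<in> CB G \<Longrightarrow> \<rho> i l x \<in> CB G"
  proof -
    fix i l x assume h: "i \<in> {1..?d}" "(l::real) \<ge> 0" "x \<in> CB G"
    have "(l, x) \<in> topspace (RCBtop G)" using h by (simp add: topspace_RCBtop)
    then have "(\<lambda>(l, x). \<rho> i l x) (l, x) \<in> topspace (CBtop G)"
      using continuous_map_image_subset_topspace[OF ric[OF h(1)]] by blast
    then show "\<rho> i l x \<in> CB G" by (simp add: topspace_CBtop)
  qed
  have main: "\<rho>0 (cbadd x y) = cbadd (\<rho>0 x) (\<rho>0 y) \<and>
      (\<forall>i\<in>{1..?d}. \<forall>t\<ge>0. \<rho> i t (cbadd x y) = cbadd (\<rho> i t x) (\<rho> i t y))"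
    if x: "x \<in> CB G" and y: "y \<in> CB G" for x y
  proof -
    let ?xy = "cbadd x y"
    have xy: "?xy \<in> CB G" using x y by (rule M.closed)
    define c where "c = ?p (\<rho>0 ?xy) (?n (?p (\<rho>0 x) (\<rho>0 y)))"
    define e where "e i t = ?p (\<rho> i t ?xy) (?n (?p (\<rho> i t x) (\<rho> i t y)))" for i t
    have cin: "c \<in> CB G" unfolding c_def using r0in x y xy by (intro M.closed M.n_in) auto
    have ein: "\<forall>i\<in>{1..?d}. \<forall>t\<ge>0. e i t \<in> CB G"
      unfolding e_def using riin x y xy by (auto intro!: M.closed M.n_in)
    have eadd: "\<forall>i\<in>{1..?d}. \<forall>a\<ge>0. \<forall>b\<ge>0. e i (a + b) = ?p (e i a) (e i b)"
    proof (intro ballI allI impI)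
      fix i and a b :: real assume i: "i \<in> {1..?d}" and ab: "a \<ge> 0" "b \<ge> 0"
      have m: "\<rho> i a ?xy \<in> CB G" "\<rho> i b ?xy \<in> CB G" "\<rho> i a x \<in> CB G" "\<rho> i b x \<in> CB G"
        "\<rho> i a y \<in> CB G" "\<rho> i b y \<in> CB G" using riin i ab x y xy by auto
      have "e i (a + b) = ?p (?p (\<rho> i a ?xy) (\<rho> i b ?xy))
                 (?n (?p (?p (\<rho> i a x) (\<rho> i b x)) (?p (\<rho> i a y) (\<rho> i b y))))"
        unfolding e_def using radd i ab x y xy by simp
      also have "?p (?p (\<rho> i a x) (\<rho> i b x)) (?p (\<rho> i a y) (\<rho> i b y))
               = ?p (?p (\<rho> i a x) (\<rho> i a y)) (?p (\<rho> i b x) (\<rho> i b y))"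
        using m by (simp add: M.swap4)
      also have "?p (?p (\<rho> i a ?xy) (\<rho> i b ?xy)) (?n (?p (?p (\<rho> i a x) (\<rho> i a y)) (?p (\<rho> i b x) (\<rho> i b y))))
               = ?p (e i a) (e i b)"
        unfolding e_def using m by (intro M.mixed M.closed)
      finally show "e i (a + b) = ?p (e i a) (e i b)" .
    qed
    have W: "iter_sum ?p (\<lambda>i. e i (l ^ i)) c ?d = ?z" if l: "l \<ge> 0" for l
    proof -
      have mx: "\<forall>i\<in>{1..?d}. \<rho> i (l ^ i) x \<in> CB G" and my: "\<forall>i\<in>{1..?d}. \<rho> i (l ^ i) y \<in> CB G"
        and mxy: "\<forall>i\<in>{1..?d}. \<rho> i (l ^ i) ?xy \<in> CB G" using riin l x y xy by auto
      have "iter_sum ?p (\<lambda>i. ?p (\<rho> i (l ^ i) x) (\<rho> i (l ^ i) y)) (?p (\<rho>0 x) (\<rho>0 y)) ?d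
          = ?p (D l x) (D l y)"
        using M.is_mult[OF mx my r0in[OF x] r0in[OF y]] Dexp[OF l x] Dexp[OF l y] by simp
      also have "\<dots> = D l ?xy" using Dadd[OF l x y] by simp
      finally have E1: "iter_sum ?p (\<lambda>i. ?p (\<rho> i (l ^ i) x) (\<rho> i (l ^ i) y)) (?p (\<rho>0 x) (\<rho>0 y)) ?d = D l ?xy" .
      have mxy2: "\<forall>i\<in>{1..?d}. ?p (\<rho> i (l ^ i) x) (\<rho> i (l ^ i) y) \<in> CB G"
        using mx my by (auto intro: M.closed)
      have "iter_sum ?p (\<lambda>i. e i (l ^ i)) c ?d
          = ?p (iter_sum ?p (\<lambda>i. \<rho> i (l ^ i) ?xy) (\<rho>0 ?xy) ?d)
               (?n (iter_sum ?p (\<lambda>i. ?p (\<rho> i (l ^ i) x) (\<rho> i (l ^ i) y)) (?p (\<rho>0 x) (\<rho>0 y)) ?d))"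
        unfolding e_def c_def
        by (rule M.is_diff[OF mxy mxy2 r0in[OF xy] M.closed[OF r0in[OF x] r0in[OF y]]])
      also have "\<dots> = ?p (D l ?xy) (?n (D l ?xy))" using E1 Dexp[OF l xy] by simp
      also have "\<dots> = ?z" using Dexp[OF l xy] by (intro M.rinv) (simp add: M.is_in mxy r0in xy)
      finally show ?thesis .
    qed
    have W0: "iter_sum ?p (\<lambda>i. e i (l ^ i)) ?z ?d = ?z" and c0: "c = ?z" if l: "l \<ge> 0" for l
    proof -
      have ein_l: "\<forall>i\<in>{1..?d}. e i (l ^ i) \<in> CB G" using ein l by auto
      have base: "\<And>l. l \<ge> 0 \<Longrightarrow> iter_sum ?p (\<lambda>i. e i (l ^ i)) c ?d = ?p c (iter_sum ?p (\<lambda>i. e i (l ^ i)) ?z ?d)"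
        using ein cin by (intro M.is_base) auto
      have e0: "\<forall>i\<in>{1..?d}. e i ((0::real) ^ i) = ?z"
      proof
        fix i assume i: "i \<in> {1..?d}"
        have "e i 0 = ?z" using eadd ein i by (intro M.add_zero) auto
        moreover have "(0::real) ^ i = 0" using i by (intro zero_power) auto
        ultimately show "e i ((0::real) ^ i) = ?z" by (simp only:)
      qed
      have z0: "iter_sum ?p (\<lambda>i. e i ((0::real) ^ i)) ?z ?d = ?z" by (rule M.is_zero[OF e0])
      have w0: "iter_sum ?p (\<lambda>i. e i ((0::real) ^ i)) c ?d = ?z" by (rule W) simp
      have "?p c ?z = ?z" using w0 base[of 0] z0 by simp
      then show c0: "c = ?z" using M.rid[OF cin] by simp
      have sin: "iter_sum ?p (\<lambda>i. e i (l ^ i)) ?z ?d \<in> CB G" by (rule M.is_in[OF ein_l M.z_in])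
      have "?p c (iter_sum ?p (\<lambda>i. e i (l ^ i)) ?z ?d) = ?z" using W[OF l] base[OF l] by simp
      then show "iter_sum ?p (\<lambda>i. e i (l ^ i)) ?z ?d = ?z"
        using c0 M.lid[OF sin] by simp
    qed
    have ez: "\<forall>i\<in>{1..?d}. \<forall>t\<ge>0. e i t = ?z"
      by (rule M.core[OF ein eadd]) (intro allI impI W0)
    have "c = ?z" using c0[of 0] by simp
    then have c1: "?p (\<rho>0 ?xy) (?n (?p (\<rho>0 x) (\<rho>0 y))) = ?z" unfolding c_def .
    have a1: "\<rho>0 ?xy \<in> CB G" by (rule r0in[OF xy])
    have a2: "?p (\<rho>0 x) (\<rho>0 y) \<in> CB G" by (rule M.closed[OF r0in[OF x] r0in[OF y]])
    have r0: "\<rho>0 ?xy = ?p (\<rho>0 x) (\<rho>0 y)" by (rule M.diff_z[OF a1 a2 c1])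
    have ri: "\<forall>i\<in>{1..?d}. \<forall>t\<ge>0. \<rho> i t ?xy = ?p (\<rho> i t x) (\<rho> i t y)"
    proof (intro ballI allI impI)
      fix i and t :: real assume i: "i \<in> {1..?d}" and t: "t \<ge> 0"
      have "e i t = ?z" using ez i t by blast
      then have e1: "?p (\<rho> i t ?xy) (?n (?p (\<rho> i t x) (\<rho> i t y))) = ?z" unfolding e_def .
      have b1: "\<rho> i t ?xy \<in> CB G" by (rule riin[OF i t xy])
      have b2: "?p (\<rho> i t x) (\<rho> i t y) \<in> CB G" by (rule M.closed[OF riin[OF i t x] riin[OF i t y]])
      show "\<rho> i t ?xy = ?p (\<rho> i t x) (\<rho> i t y)" by (rule M.diff_z[OF b1 b2 e1])
    qed
    show ?thesis using r0 ri by (intro conjI)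
  qed
  show ?thesis
  proof (intro conjI ballI allI impI)
    fix x y assume "x \<in> CB G" "y \<in> CB G"
    then show "\<rho>0 (cbadd x y) = cbadd (\<rho>0 x) (\<rho>0 y)" using main by blast
  next
    fix i l x y assume "i \<in> {1..?d}" "(l::real) \<ge> 0" "x \<in> CB G" "y \<in> CB G"
    then show "\<rho> i l (cbadd x y) = cbadd (\<rho> i l x) (\<rho> i l y)" using main by blast
  qed
qed

end
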